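(* Let $\langle X\mid R\rangle$ be a side-confluent $N$-homogeneous presentation with operator $S$. For every integer $m$ with $N+1\leq m\leq 2N-1$, writing $S_1=\mathrm{id}_{V^{\otimes m-N}}\otimes S$ and $S_2=S\otimes\mathrm{id}_{V^{\otimes m-N}}$, there exists an integer $k$ such that $$\langle\mathrm{id}_{V^{\otimes m}}-S_1,\mathrm{id}_{V^{\otimes m}}-S_2\rangle^k=\langle\mathrm{id}_{V^{\otimes m}}-S_2,\mathrm{id}_{V^{\otimes m}}-S_1\rangle^k.$$ Moreover, for every $w\in X^{(m)}$ such that $S_1(w)\neq w$ and $S_2(w)\neq w$, we have $\mathrm{lm}\left(\langle\mathrm{id}_{V^{\otimes m}}-S_1,\mathrm{id}_{V^{\otimes m}}-S_2\rangle^k(w)\right)=w$.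
   Context: $\mathbb{K}$ is a field, $N\geq2$. $X^{(m)}$ is the set of words of length $m$ on $X$, $V=\mathbb{K}X$, $V^{\otimes m}=\mathbb{K}X^{(m)}$. An $N$-homogeneous presentation $\langle X\mid R\rangle$: $R\subset V^{\otimes N}$. $X$ is totally ordered, $X^{(m)}$ lexicographically ordered, $\mathrm{lm}(f)$ is the greatest word occurring in $f\neq0$. Conventions: each $f\in R$ has coefficient $1$ on $\mathrm{lm}(f)$; a word is a normal form if it has no factor $\mathrm{lm}(f)$, $f\in R$; the presentation is reduced ($\mathrm{lm}(f)-f$ is a combination of normal-form words, and $\mathrm{lm}(f)$ has no factor $\mathrm{lm}(g)$, $g\in R\setminus\{f\}$). The operator of the presentation is $S\in\mathrm{End}(V^{\otimes N})$, $S(\mathrm{lm}(f))=\mathrm{lm}(f)-f$ for $f\in R$, $S(w)=w$ for other words. For endomorphisms $s,t$, $\langle t,s\rangle^k$ denotes $\cdots sts$ with $k$ factors. Side-confluent: for each $1\leq m\leq N-1$ some $k$ satisfies $\langle\mathrm{id}_{V^{\otimes m}}\otimes S,S\otimes\mathrm{id}_{V^{\otimes m}}\rangle^k=\langle S\otimes\mathrm{id}_{V^{\otimes m}},\mathrm{id}_{V^{\otimes m}}\otimes S\rangle^k$. *)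

theory Defs
  imports Main "HOL-Library.List_Lexorder" "HOL-Library.Sublist"
begin

text \<open>Words over X are lists of the type 'x (X = UNIV). Elements of the tensor powers
  V^{\<otimes>m} = K X^(m) are finitely supported functions from words to the field,
  supported on words of length m. Words are compared lexicographically
  (List_Lexorder), which is the lexicographic order on X^(m).\<close>

type_synonym ('x, 'k) vec = "'x list \<Rightarrow> 'k"

definition supp :: "('x, 'k::zero) vec \<Rightarrow> 'x list set" where
  "supp v = {w. v w \<noteq> 0}"

definition tens :: "nat \<Rightarrow> ('x, 'k::zero) vec set" where
  "tens m = {v. finite (supp v) \<and> (\<forall>w\<in>supp v. length w = m)}"

definition wvec :: "'x list \<Rightarrow> ('x, 'k::{zero,one}) vec" where
  "wvec w = (\<lambda>u. if u = w then 1 else 0)"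

definition lm :: "('x::linorder, 'k::zero) vec \<Rightarrow> 'x list" where
  "lm f = Max (supp f)"

definition lin :: "('x list \<Rightarrow> ('x, 'k::comm_semiring_1) vec) \<Rightarrow> ('x, 'k) vec \<Rightarrow> ('x, 'k) vec" where
  "lin T v = (\<lambda>u. \<Sum>w\<in>supp v. v w * T w u)"

definition normal_form :: "('x::linorder, 'k::zero) vec set \<Rightarrow> 'x list \<Rightarrow> bool" where
  "normal_form R w \<longleftrightarrow> (\<forall>f\<in>R. \<not> sublist (lm f) w)"

definition reduced_presentation :: "nat \<Rightarrow> ('x::linorder, 'k::field) vec set \<Rightarrow> bool" where
  "reduced_presentation N R \<longleftrightarrow>
     R \<subseteq> tens N \<and>
     (\<forall>f\<in>R. supp f \<noteq> {} \<and> f (lm f) = 1) \<and>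
     (\<forall>f\<in>R. \<forall>w\<in>supp (\<lambda>u. wvec (lm f) u - f u). normal_form R w) \<and>
     (\<forall>f\<in>R. \<forall>g\<in>R - {f}. \<not> sublist (lm g) (lm f))"

definition opw :: "('x::linorder, 'k::field) vec set \<Rightarrow> 'x list \<Rightarrow> ('x, 'k) vec" where
  "opw R w = (if \<exists>f\<in>R. lm f = w
              then (\<lambda>u. wvec w u - (THE f. f \<in> R \<and> lm f = w) u)
              else wvec w)"

text \<open>Concatenation of a word with a vector on the left / right (a \<otimes> v, v \<otimes> b).\<close>
definition lcat :: "'x list \<Rightarrow> ('x, 'k::zero) vec \<Rightarrow> ('x, 'k) vec" where
  "lcat a v = (\<lambda>u. if prefix a u then v (drop (length a) u) else 0)"

definition rcat :: "('x, 'k::zero) vec \<Rightarrow> 'x list \<Rightarrow> ('x, 'k) vec" where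
  "rcat v b = (\<lambda>u. if suffix b u then v (take (length u - length b) u) else 0)"

text \<open>id_{V^{\<otimes>m}} \<otimes> T and T \<otimes> id_{V^{\<otimes>m}}, on words.\<close>
definition tensL :: "nat \<Rightarrow> ('x list \<Rightarrow> ('x, 'k::zero) vec) \<Rightarrow> 'x list \<Rightarrow> ('x, 'k) vec" where
  "tensL m T w = lcat (take m w) (T (drop m w))"

definition tensR :: "nat \<Rightarrow> ('x list \<Rightarrow> ('x, 'k::zero) vec) \<Rightarrow> 'x list \<Rightarrow> ('x, 'k) vec" where
  "tensR m T w = rcat (T (take (length w - m) w)) (drop (length w - m) w)"

text \<open>alt t s k = <t,s>^k = ... s t s  (k factors, rightmost s).\<close>
fun alt :: "('a \<Rightarrow> 'a) \<Rightarrow> ('a \<Rightarrow> 'a) \<Rightarrow> nat \<Rightarrow> 'a \<Rightarrow> 'a" where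
  "alt t s 0 = id"
| "alt t s (Suc k) = (if even k then s else t) \<circ> alt t s k"

definition side_confluent :: "nat \<Rightarrow> ('x::linorder, 'k::field) vec set \<Rightarrow> bool" where
  "side_confluent N R \<longleftrightarrow>
     (\<forall>m. 1 \<le> m \<and> m \<le> N - 1 \<longrightarrow>
        (\<exists>k\<ge>1. \<forall>v\<in>tens (m + N).
            alt (lin (tensL m (opw R))) (lin (tensR m (opw R))) k v
          = alt (lin (tensR m (opw R))) (lin (tensL m (opw R))) k v))"

end

theory Submission imports Defs "HOL-Library.Function_Algebras" begin

definition sg :: "nat \<Rightarrow> 'v::ab_group_add \<Rightarrow> 'v" where
  "sg k y = (if even k then y else - y)"

locale proj2 =
  fixes V :: "'v::ab_group_add set" and t s :: "'v \<Rightarrow> 'v"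
  assumes V_diff: "x\<in>V \<Longrightarrow> y\<in>V \<Longrightarrow> x - y \<in> V" and V_ne: "V \<noteq> {}"
    and t_V: "x\<in>V \<Longrightarrow> t x \<in> V" and s_V: "x\<in>V \<Longrightarrow> s x \<in> V"
    and t_diff: "x\<in>V \<Longrightarrow> y\<in>V \<Longrightarrow> t (x - y) = t x - t y"
    and s_diff: "x\<in>V \<Longrightarrow> y\<in>V \<Longrightarrow> s (x - y) = s x - s y"
    and t_idem: "x\<in>V \<Longrightarrow> t (t x) = t x"
    and s_idem: "x\<in>V \<Longrightarrow> s (s x) = s x"
begin

lemma swap: "proj2 V s t"
  by (unfold_locales) (auto intro: V_diff V_ne t_V s_V t_diff s_diff t_idem s_idem simp: V_ne)

lemma zero_V: "0 \<in> V"
proof -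
  obtain x where "x \<in> V" using V_ne by auto
  then show ?thesis using V_diff[of x x] by simp
qed

lemma neg_V: "x \<in> V \<Longrightarrow> - x \<in> V"
  using V_diff[OF zero_V, of x] by simp

lemma add_V: "x \<in> V \<Longrightarrow> y \<in> V \<Longrightarrow> x + y \<in> V"
  using V_diff[of x "- y"] neg_V by simp

lemma sg_V: "x \<in> V \<Longrightarrow> sg k x \<in> V"
  by (simp add: sg_def neg_V)

lemma lin_neg:
  fixes f :: "'v \<Rightarrow> 'v"
  assumes "\<And>x y. x\<in>V \<Longrightarrow> y\<in>V \<Longrightarrow> f (x - y) = f x - f y" "x \<in> V"
  shows "f (- x) = - f x" "f (sg k x) = sg k (f x)"
proof -
  have "f 0 = 0" using assms(1)[OF zero_V zero_V] by simp
  then show "f (- x) = - f x" using assms(1)[OF zero_V assms(2)] by simp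
  then show "f (sg k x) = sg k (f x)" by (simp add: sg_def)
qed

lemma lin_add:
  fixes f :: "'v \<Rightarrow> 'v"
  assumes "\<And>x y. x\<in>V \<Longrightarrow> y\<in>V \<Longrightarrow> f (x - y) = f x - f y" "x \<in> V" "y \<in> V"
  shows "f (x + y) = f x + f y"
proof -
  have "f (- y) = - f y" by (rule lin_neg(1)) (use assms in auto)
  then show ?thesis using assms(1)[OF assms(2) neg_V[OF assms(3)]] by simp
qed

lemma alt_V:
  assumes "\<And>x. x\<in>V \<Longrightarrow> f x \<in> V" "\<And>x. x\<in>V \<Longrightarrow> g x \<in> V" "x \<in> V"
  shows "alt f g k x \<in> V"
  using assms by (induction k) auto

lemma tc_V: "x\<in>V \<Longrightarrow> x - t x \<in> V" by (simp add: V_diff t_V)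
lemma sc_V: "x\<in>V \<Longrightarrow> x - s x \<in> V" by (simp add: V_diff s_V)

abbreviation "c (k::nat) \<equiv> (if even k then s else t)"

lemma c_V: "x\<in>V \<Longrightarrow> c k x \<in> V" by (simp add: t_V s_V)
lemma c_diff: "x\<in>V \<Longrightarrow> y\<in>V \<Longrightarrow> c k (x - y) = c k x - c k y" by (simp add: t_diff s_diff)
lemma c_idem: "x\<in>V \<Longrightarrow> c k (c k x) = c k x" by (simp add: t_idem s_idem)

lemma X_Suc: "alt (\<lambda>x. x - t x) (\<lambda>x. x - s x) (Suc k) x
   = alt (\<lambda>x. x - t x) (\<lambda>x. x - s x) k x - c k (alt (\<lambda>x. x - t x) (\<lambda>x. x - s x) k x)"
  by simp

lemma L:
  assumes "x \<in> V"
  shows "c (Suc k) (alt (\<lambda>x. x - t x) (\<lambda>x. x - s x) (Suc k) x)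
     = sg k (alt s t (Suc k) x) + sg (Suc k) (alt t s (Suc (Suc k)) x)"
proof (induction k)
  case 0
  show ?case using assms by (simp add: sg_def t_diff s_V)
next
  case (Suc k)
  let ?X = "alt (\<lambda>x. x - t x) (\<lambda>x. x - s x)"
  have XV: "?X j x \<in> V" for j by (rule alt_V[OF tc_V sc_V assms])
  have AV: "alt t s j x \<in> V" for j by (rule alt_V[OF t_V s_V assms])
  have BV: "alt s t j x \<in> V" for j by (rule alt_V[OF s_V t_V assms])
  have e1: "?X (Suc (Suc k)) x = ?X (Suc k) x - c (Suc k) (?X (Suc k) x)"
    by (rule X_Suc)
  have e2: "c (Suc (Suc k)) (?X (Suc k) x) = 0"
  proof -
    have "?X (Suc k) x = ?X k x - c k (?X k x)" by (rule X_Suc)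
    moreover have "c (Suc (Suc k)) = c k" by simp
    ultimately show ?thesis using c_diff[OF XV c_V[OF XV], of k k k] c_idem[OF XV, of k k] by simp
  qed
  have cd: "c (Suc (Suc k)) (a + b) = c (Suc (Suc k)) a + c (Suc (Suc k)) b" if "a\<in>V" "b\<in>V" for a b
    by (rule lin_add) (use that in \<open>auto simp: t_diff s_diff\<close>)
  have cs: "c (Suc (Suc k)) (sg j a) = sg j (c (Suc (Suc k)) a)" if "a\<in>V" for a j
    by (rule lin_neg(2)) (use that in \<open>auto simp: t_diff s_diff\<close>)
  have eB: "c (Suc (Suc k)) (alt s t (Suc k) x) = alt s t (Suc (Suc k)) x" by simp
  have eA: "c (Suc (Suc k)) (alt t s (Suc (Suc k)) x) = alt t s (Suc (Suc (Suc k))) x" by simp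
  have "c (Suc (Suc k)) (?X (Suc (Suc k)) x)
      = c (Suc (Suc k)) (?X (Suc k) x) - c (Suc (Suc k)) (c (Suc k) (?X (Suc k) x))"
    unfolding e1 by (rule c_diff[OF XV c_V[OF XV]])
  also have "\<dots> = - c (Suc (Suc k)) (sg k (alt s t (Suc k) x) + sg (Suc k) (alt t s (Suc (Suc k)) x))"
    using e2 Suc by (simp del: alt.simps)
  also have "\<dots> = - (sg k (alt s t (Suc (Suc k)) x) + sg (Suc k) (alt t s (Suc (Suc (Suc k))) x))"
    using cd[OF sg_V[OF BV] sg_V[OF AV]] cs[OF BV] cs[OF AV] eA eB by (simp del: alt.simps)
  also have "\<dots> = sg (Suc k) (alt s t (Suc (Suc k)) x) + sg (Suc (Suc k)) (alt t s (Suc (Suc (Suc k))) x)"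
    by (simp add: sg_def)
  finally show ?case .
qed

end

lemma main_alg:
  assumes P: "proj2 V t s" and x: "x \<in> V"
  shows "alt (\<lambda>x. x - t x) (\<lambda>x. x - s x) k x - sg k (alt t s k x)
       = alt (\<lambda>x. x - s x) (\<lambda>x. x - t x) k x - sg k (alt s t k x)"
proof (induction k)
  case 0
  then show ?case by (simp add: sg_def)
next
  case (Suc k)
  interpret P: proj2 V t s by (rule P)
  interpret Q: proj2 V s t by (rule P.swap)
  show ?case
  proof (cases k)
    case 0
    then show ?thesis by (simp add: sg_def)
  next
    case (Suc j)
    have LP: "(if even k then s else t) (alt (\<lambda>x. x - t x) (\<lambda>x. x - s x) k x)
        = sg j (alt s t k x) + sg k (alt t s (Suc k) x)"
      using P.L[OF x, of j] Suc by simp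
    have LQ: "(if even k then t else s) (alt (\<lambda>x. x - s x) (\<lambda>x. x - t x) k x)
        = sg j (alt t s k x) + sg k (alt s t (Suc k) x)"
      using Q.L[OF x, of j] Suc by simp
    have sj: "sg j y = - sg k y" for y :: 'a using Suc by (simp add: sg_def)
    have sS: "sg (Suc k) y = - sg k y" for y :: 'a by (simp add: sg_def)
    let ?X = "alt (\<lambda>x. x - t x) (\<lambda>x. x - s x)"
    let ?Y = "alt (\<lambda>x. x - s x) (\<lambda>x. x - t x)"
    have "?X (Suc k) x = ?X k x - (if even k then s else t) (?X k x)" by simp
    then have 1: "?X (Suc k) x - sg (Suc k) (alt t s (Suc k) x) = ?X k x + sg k (alt s t k x)"
      using LP sj sS by simp
    have "?Y (Suc k) x = ?Y k x - (if even k then t else s) (?Y k x)" by simp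
    then have 2: "?Y (Suc k) x - sg (Suc k) (alt s t (Suc k) x) = ?Y k x + sg k (alt t s k x)"
      using LQ sj sS by simp
    have 3: "?X k x + sg k (alt s t k x) = ?Y k x + sg k (alt t s k x)"
      using Suc.IH by (simp add: algebra_simps)
    show ?thesis using 1 2 3 by simp
  qed
qed


lemma supp_wvec: "supp (wvec w :: ('x,'k::zero_neq_one) vec) = {w}"
  by (auto simp: supp_def wvec_def)

lemma lin_eq_sum:
  assumes "finite F" "supp v \<subseteq> F"
  shows "lin T v u = (\<Sum>w\<in>F. v w * T w u)"
  unfolding lin_def by (rule sum.mono_neutral_left) (use assms in \<open>auto simp: supp_def\<close>)

lemma lin_diff:
  fixes x y :: "('x,'k::comm_ring_1) vec"
  assumes "finite (supp x)" "finite (supp y)"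
  shows "lin T (x - y) = lin T x - lin T y"
proof
  fix u
  let ?F = "supp x \<union> supp y"
  have f: "finite ?F" using assms by simp
  have s: "supp (x - y) \<subseteq> ?F" by (auto simp: supp_def)
  have "lin T (x - y) u = (\<Sum>w\<in>?F. (x w - y w) * T w u)"
    using lin_eq_sum[OF f s] by simp
  also have "\<dots> = (\<Sum>w\<in>?F. x w * T w u) - (\<Sum>w\<in>?F. y w * T w u)"
    by (simp add: left_diff_distrib sum_subtractf)
  also have "\<dots> = lin T x u - lin T y u"
    using lin_eq_sum[OF f, of x T u] lin_eq_sum[OF f, of y T u] by auto
  finally show "lin T (x - y) u = (lin T x - lin T y) u" by simp
qed

lemma supp_lin: "supp (lin T v) \<subseteq> (\<Union>w\<in>supp v. supp (T w))"
proof
  fix u assume "u \<in> supp (lin T v)"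
  then have "(\<Sum>w\<in>supp v. v w * T w u) \<noteq> 0" by (simp add: supp_def lin_def)
  then obtain w where "w \<in> supp v" "v w * T w u \<noteq> 0" by (meson sum.neutral)
  then show "u \<in> (\<Union>w\<in>supp v. supp (T w))" by (auto simp: supp_def)
qed

lemma lin_lin:
  fixes v :: "('x,'k::comm_semiring_1) vec"
  assumes "finite (supp v)" "\<forall>w\<in>supp v. finite (supp (T' w))"
  shows "lin T (lin T' v) = lin (\<lambda>w. lin T (T' w)) v"
proof
  fix u
  let ?F = "\<Union>w\<in>supp v. supp (T' w)"
  have f: "finite ?F" using assms by simp
  have "lin T (lin T' v) u = (\<Sum>z\<in>?F. lin T' v z * T z u)"
    by (rule lin_eq_sum[OF f supp_lin])
  also have "\<dots> = (\<Sum>z\<in>?F. \<Sum>w\<in>supp v. v w * T' w z * T z u)"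
    by (simp add: lin_def sum_distrib_right)
  also have "\<dots> = (\<Sum>w\<in>supp v. \<Sum>z\<in>?F. v w * T' w z * T z u)"
    by (rule sum.swap)
  also have "\<dots> = (\<Sum>w\<in>supp v. v w * (\<Sum>z\<in>?F. T' w z * T z u))"
    by (simp add: sum_distrib_left mult.assoc)
  also have "\<dots> = (\<Sum>w\<in>supp v. v w * lin T (T' w) u)"
  proof (rule sum.cong[OF refl])
    fix w assume "w \<in> supp v"
    then have "supp (T' w) \<subseteq> ?F" by auto
    then show "v w * (\<Sum>z\<in>?F. T' w z * T z u) = v w * lin T (T' w) u"
      using lin_eq_sum[OF f, of "T' w" T u] by simp
  qed
  finally show "lin T (lin T' v) u = lin (\<lambda>w. lin T (T' w)) v u"
    by (simp add: lin_def)
qed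

lemma lin_idem:
  fixes v :: "('x,'k::comm_semiring_1) vec"
  assumes "finite (supp v)" "\<forall>w\<in>supp v. finite (supp (T w)) \<and> lin T (T w) = T w"
  shows "lin T (lin T v) = lin T v"
proof -
  have "lin T (lin T v) = lin (\<lambda>w. lin T (T w)) v"
    using assms by (intro lin_lin) auto
  also have "\<dots> = lin T v"
  proof
    fix u
    show "lin (\<lambda>w. lin T (T w)) v u = lin T v u"
      unfolding lin_def[of "\<lambda>w. lin T (T w)"] lin_def[of T v]
      by (rule sum.cong) (use assms(2) in auto)
  qed
  finally show ?thesis .
qed

lemma lin_wvec: "lin T (wvec w :: ('x,'k::comm_semiring_1) vec) = T w"
  unfolding lin_def supp_wvec by (simp add: wvec_def)

lemma lin_basis:
  fixes x :: "('x,'k::comm_semiring_1) vec"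
  assumes "finite (supp x)" "\<forall>z\<in>supp x. T z = wvec z"
  shows "lin T x = x"
proof
  fix u
  have "lin T x u = (\<Sum>z\<in>supp x. if z = u then x z else 0)"
    unfolding lin_def using assms(2) by (intro sum.cong) (auto simp: wvec_def)
  also have "\<dots> = x u" using assms(1) by (auto simp: sum.delta' supp_def)
  finally show "lin T x u = x u" .
qed

definition good :: "('x::linorder list \<Rightarrow> ('x,'k::field) vec) \<Rightarrow> 'x list \<Rightarrow> bool" where
  "good S u \<longleftrightarrow> finite (supp (S u)) \<and> (\<forall>z\<in>supp (S u). length z = length u \<and> z \<le> u)
     \<and> (S u \<noteq> wvec u \<longrightarrow> S u u = 0) \<and> lin S (S u) = S u"

lemma good_D:
  assumes "good S u"
  shows "finite (supp (S u))" "z \<in> supp (S u) \<Longrightarrow> length z = length u"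
    "z \<in> supp (S u) \<Longrightarrow> z \<le> u" "S u \<noteq> wvec u \<Longrightarrow> S u u = 0" "lin S (S u) = S u"
  using assms unfolding good_def by blast+

lemma opw_lm:
  assumes red: "reduced_presentation N R" and f: "f \<in> R"
  shows "opw R (lm f) = (\<lambda>u. wvec (lm f) u - f u)"
proof -
  have "(THE g. g \<in> R \<and> lm g = lm f) = f"
  proof (rule the_equality)
    fix g assume g: "g \<in> R \<and> lm g = lm f"
    show "g = f"
    proof (rule ccontr)
      assume "g \<noteq> f"
      then have "\<not> sublist (lm g) (lm f)" using red f g unfolding reduced_presentation_def by blast
      then show False using g by simp
    qed
  qed (use f in auto)
  then show ?thesis using f by (auto simp: opw_def)
qed

lemma opw_good:
  assumes red: "reduced_presentation N R"
  shows "good (opw R) u"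
proof (cases "\<exists>f\<in>R. lm f = u")
  case False
  then have e: "opw R u = wvec u" by (simp add: opw_def)
  show ?thesis unfolding good_def e
    by (simp add: supp_wvec lin_wvec e)
next
  case True
  then obtain f where f: "f \<in> R" "lm f = u" by auto
  have e: "opw R u = (\<lambda>v. wvec u v - f v)" using opw_lm[OF red f(1)] f(2) by simp
  have fin: "finite (supp f)" and len: "\<forall>z\<in>supp f. length z = N" and ne: "supp f \<noteq> {}"
    and one: "f u = 1"
    using red f unfolding reduced_presentation_def tens_def by auto
  have um: "u \<in> supp f" using fin ne f(2) Max_in unfolding lm_def by metis
  have le: "z \<le> u" if "z \<in> supp f" for z using fin that f(2) Max_ge unfolding lm_def by metis
  have ss: "supp (opw R u) \<subseteq> {u} \<union> supp f" by (auto simp: e supp_def wvec_def)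
  have nf: "\<forall>z\<in>supp (opw R u). normal_form R z"
    using red f unfolding reduced_presentation_def e by blast
  have wz: "opw R z = wvec z" if "z \<in> supp (opw R u)" for z
  proof -
    have "\<not> (\<exists>g\<in>R. lm g = z)"
      using nf that unfolding normal_form_def by auto
    then show ?thesis by (simp add: opw_def)
  qed
  have finS: "finite (supp (opw R u))" using ss fin finite_subset by blast
  have bz: "\<forall>z\<in>supp (opw R u). length z = length u \<and> z \<le> u"
  proof
    fix z assume "z \<in> supp (opw R u)"
    then have "z \<in> {u} \<union> supp f" using ss by blast
    then show "length z = length u \<and> z \<le> u" using len um le f(2) by auto
  qed
  show ?thesis unfolding good_def
  proof (intro conjI impI)
    show "finite (supp (opw R u))" by (rule finS)
    show "\<forall>z\<in>supp (opw R u). length z = length u \<and> z \<le> u" by (rule bz)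
  next
    show "opw R u u = 0" using one by (simp add: e wvec_def)
  next
    show "lin (opw R) (opw R u) = opw R u"
      by (rule lin_basis[OF finS]) (use wz in auto)
  qed
qed

lemma ord_pre: "y \<le> u \<Longrightarrow> p @ y \<le> p @ (u :: 'a::linorder list)"
  unfolding list_le_def list_less_def using lexord_append_leftI by blast

lemma ord_suf: "length y = length u \<Longrightarrow> y \<le> u \<Longrightarrow> y @ b \<le> u @ (b :: 'a::linorder list)"
  unfolding list_le_def list_less_def using lexord_sufI by (metis order_refl)

lemma supp_lcat: "supp (lcat p x) = (\<lambda>y. p @ y) ` supp x"
  by (auto simp: supp_def lcat_def prefix_def)

lemma supp_rcat: "supp (rcat x b) = (\<lambda>y. y @ b) ` supp x"
  by (auto simp: supp_def rcat_def suffix_def)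

lemma lcat_wvec: "lcat p (wvec u :: ('x,'k::zero_neq_one) vec) = wvec (p @ u)"
  by (rule ext) (auto simp: lcat_def wvec_def prefix_def)

lemma rcat_wvec: "rcat (wvec u :: ('x,'k::zero_neq_one) vec) b = wvec (u @ b)"
  by (rule ext) (auto simp: rcat_def wvec_def suffix_def)

lemma lin_lcat:
  fixes x :: "('x,'k::comm_semiring_1) vec"
  assumes "length p = a"
  shows "lin (tensL a S) (lcat p x) = lcat p (lin S x)"
proof
  fix u
  have "lin (tensL a S) (lcat p x) u = (\<Sum>y\<in>supp x. lcat p x (p @ y) * tensL a S (p @ y) u)"
    unfolding lin_def supp_lcat by (subst sum.reindex) (auto simp: inj_on_def)
  also have "\<dots> = (\<Sum>y\<in>supp x. x y * lcat p (S y) u)"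
    using assms by (simp add: tensL_def lcat_def)
  also have "\<dots> = lcat p (lin S x) u"
    by (cases "prefix p u") (simp_all add: lcat_def lin_def)
  finally show "lin (tensL a S) (lcat p x) u = lcat p (lin S x) u" .
qed

lemma lin_rcat:
  fixes x :: "('x,'k::comm_semiring_1) vec"
  assumes "length b = a"
  shows "lin (tensR a S) (rcat x b) = rcat (lin S x) b"
proof
  fix u
  have "lin (tensR a S) (rcat x b) u = (\<Sum>y\<in>supp x. rcat x b (y @ b) * tensR a S (y @ b) u)"
    unfolding lin_def supp_rcat by (subst sum.reindex) (auto simp: inj_on_def)
  also have "\<dots> = (\<Sum>y\<in>supp x. x y * rcat (S y) b u)"
    using assms by (simp add: tensR_def rcat_def suffix_def)
  also have "\<dots> = rcat (lin S x) b u"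
    by (cases "suffix b u") (simp_all add: rcat_def lin_def)
  finally show "lin (tensR a S) (rcat x b) u = rcat (lin S x) b u" .
qed

lemma good_tensL:
  assumes g: "\<And>u. good S u" and len: "a \<le> length w"
  shows "good (tensL a S) w"
proof -
  define p where "p = take a w"
  define u where "u = drop a w"
  have w: "w = p @ u" and lp: "length p = a" using len by (auto simp: p_def u_def)
  have T: "tensL a S w = lcat p (S u)" by (simp add: tensL_def p_def u_def)
  have gu: "good S u" by (rule g)
  show ?thesis unfolding good_def T
  proof (intro conjI impI)
    show "finite (supp (lcat p (S u)))" using good_D(1)[OF gu] by (simp add: supp_lcat)
  next
    show "\<forall>z\<in>supp (lcat p (S u)). length z = length w \<and> z \<le> w"
    proof
      fix z assume "z \<in> supp (lcat p (S u))"
      then obtain y where "z = p @ y" "y \<in> supp (S u)" by (auto simp: supp_lcat)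
      then show "length z = length w \<and> z \<le> w" using good_D(2,3)[OF gu] w ord_pre by (metis length_append)
    qed
  next
    assume "lcat p (S u) \<noteq> wvec w"
    then have "S u \<noteq> wvec u" using w lcat_wvec by metis
    then have "S u u = 0" by (rule good_D(4)[OF gu])
    then show "lcat p (S u) w = 0" by (simp add: lcat_def w)
  next
    show "lin (tensL a S) (lcat p (S u)) = lcat p (S u)"
      using lin_lcat[OF lp, of S "S u"] good_D(5)[OF gu] by simp
  qed
qed

lemma good_tensR:
  assumes g: "\<And>u. good S u" and len: "a \<le> length w"
  shows "good (tensR a S) w"
proof -
  define b where "b = drop (length w - a) w"
  define u where "u = take (length w - a) w"
  have w: "w = u @ b" and lb: "length b = a" using len by (auto simp: b_def u_def)
  have T: "tensR a S w = rcat (S u) b" by (simp add: tensR_def b_def u_def)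
  have gu: "good S u" by (rule g)
  show ?thesis unfolding good_def T
  proof (intro conjI impI)
    show "finite (supp (rcat (S u) b))" using good_D(1)[OF gu] by (simp add: supp_rcat)
  next
    show "\<forall>z\<in>supp (rcat (S u) b). length z = length w \<and> z \<le> w"
    proof
      fix z assume "z \<in> supp (rcat (S u) b)"
      then obtain y where "z = y @ b" "y \<in> supp (S u)" by (auto simp: supp_rcat)
      then show "length z = length w \<and> z \<le> w" using good_D(2,3)[OF gu] w ord_suf by (metis length_append)
    qed
  next
    assume "rcat (S u) b \<noteq> wvec w"
    then have "S u \<noteq> wvec u" using w rcat_wvec by metis
    then have "S u u = 0" by (rule good_D(4)[OF gu])
    then show "rcat (S u) b w = 0" by (simp add: rcat_def w)
  next
    show "lin (tensR a S) (rcat (S u) b) = rcat (S u) b"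
      using lin_rcat[OF lb, of S "S u"] good_D(5)[OF gu] by simp
  qed
qed

lemma tens_diff: "(x :: ('x,'k::ab_group_add) vec) \<in> tens m \<Longrightarrow> y \<in> tens m \<Longrightarrow> x - y \<in> tens m"
proof -
  assume a: "x \<in> tens m" "y \<in> tens m"
  have "supp (x - y) \<subseteq> supp x \<union> supp y" by (auto simp: supp_def)
  then show ?thesis using a unfolding tens_def by (auto intro: finite_subset)
qed

lemma zero_tens: "(0 :: ('x,'k::zero) vec) \<in> tens m"
  by (simp add: tens_def supp_def)

lemma lin_tens:
  fixes T :: "'x::linorder list \<Rightarrow> ('x,'k::field) vec"
  assumes "\<And>w. length w = m \<Longrightarrow> good T w" "v \<in> tens m"
  shows "lin T v \<in> tens m"
proof -
  have s: "supp (lin T v) \<subseteq> (\<Union>w\<in>supp v. supp (T w))" by (rule supp_lin)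
  have gT: "finite (supp (T w)) \<and> (\<forall>z\<in>supp (T w). length z = length w \<and> z \<le> w)"
    if "length w = m" for w using assms(1)[OF that] unfolding good_def by blast
  have v: "finite (supp v)" "\<forall>w\<in>supp v. length w = m" using assms(2) unfolding tens_def by auto
  have "finite (\<Union>w\<in>supp v. supp (T w))"
    by (rule finite_UN_I[OF v(1)]) (use v(2) gT in blast)
  moreover have "\<forall>z\<in>(\<Union>w\<in>supp v. supp (T w)). length z = m"
  proof
    fix z assume "z \<in> (\<Union>w\<in>supp v. supp (T w))"
    then obtain w where w: "w \<in> supp v" "z \<in> supp (T w)" by blast
    have lw: "length w = m" using v(2) w(1) by blast
    show "length z = m" using good_D(2)[OF assms(1)[OF lw] w(2)] lw by simp
  qed
  ultimately have "finite (supp (lin T v))" "\<forall>z\<in>supp (lin T v). length z = m"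
    using s finite_subset by blast+
  then show ?thesis unfolding tens_def by blast
qed

lemma proj2_lin:
  fixes T1 T2 :: "'x::linorder list \<Rightarrow> ('x,'k::field) vec"
  assumes "\<And>w. length w = m \<Longrightarrow> good T1 w" "\<And>w. length w = m \<Longrightarrow> good T2 w"
  shows "proj2 (tens m) (lin T1) (lin T2)"
proof -
  have a1: "x - y \<in> tens m" "lin T1 (x - y) = lin T1 x - lin T1 y" "lin T2 (x - y) = lin T2 x - lin T2 y"
    if x: "x \<in> tens m" and y: "y \<in> tens m" for x y :: "('x,'k) vec"
  proof -
    show "x - y \<in> tens m" by (rule tens_diff[OF x y])
    show "lin T1 (x - y) = lin T1 x - lin T1 y" using x y by (intro lin_diff) (auto simp: tens_def)
    show "lin T2 (x - y) = lin T2 x - lin T2 y" using x y by (intro lin_diff) (auto simp: tens_def)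
  qed
  have a2: "lin T1 x \<in> tens m" "lin T2 x \<in> tens m" "lin T1 (lin T1 x) = lin T1 x" "lin T2 (lin T2 x) = lin T2 x"
    if x: "x \<in> tens m" for x :: "('x,'k) vec"
  proof -
    show "lin T1 x \<in> tens m" by (rule lin_tens[OF assms(1) x])
    show "lin T2 x \<in> tens m" by (rule lin_tens[OF assms(2) x])
    have xx: "finite (supp x)" "\<And>w. w \<in> supp x \<Longrightarrow> length w = m" using x unfolding tens_def by auto
    show "lin T1 (lin T1 x) = lin T1 x"
      by (rule lin_idem[OF xx(1)]) (use xx(2) good_D[OF assms(1)] in blast)
    show "lin T2 (lin T2 x) = lin T2 x"
      by (rule lin_idem[OF xx(1)]) (use xx(2) good_D[OF assms(2)] in blast)
  qed
  have "tens m \<noteq> {}" using zero_tens by blast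
  then show ?thesis using a1 a2 by unfold_locales auto
qed


definition Inv :: "nat \<Rightarrow> 'x::linorder list \<Rightarrow> ('x,'k::field) vec \<Rightarrow> bool" where
  "Inv m w x \<longleftrightarrow> finite (supp x) \<and> x w = 1 \<and> (\<forall>z\<in>supp x. z \<le> w \<and> length z = m)"

lemma inv_step:
  fixes T :: "'x::linorder list \<Rightarrow> ('x,'k::field) vec"
  assumes g: "\<And>y. length y = m \<Longrightarrow> good T y" and Tw: "T w w = 0"
    and inv: "Inv m w x"
  shows "Inv m w (x - lin T x)"
proof -
  have fin: "finite (supp x)" and xw: "x w = 1" and sx: "\<forall>z\<in>supp x. z \<le> w \<and> length z = m"
    using inv by (auto simp: Inv_def)
  have l0: "lin T x w = 0"
    unfolding lin_def
  proof (rule sum.neutral, rule ballI)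
    fix y assume y: "y \<in> supp x"
    have "T y w = 0"
    proof (cases "y = w")
      case True then show ?thesis using Tw by simp
    next
      case False
      then have yw: "y < w" using sx y by auto
      show ?thesis
      proof (rule ccontr)
        assume "T y w \<noteq> 0"
        then have "w \<in> supp (T y)" by (simp add: supp_def)
        then have "w \<le> y" using good_D(3)[OF g[of y]] sx y by auto
        then show False using yw by simp
      qed
    qed
    then show "x y * T y w = 0" by simp
  qed
  have s: "supp (lin T x) \<subseteq> (\<Union>y\<in>supp x. supp (T y))" by (rule supp_lin)
  have fU: "finite (\<Union>y\<in>supp x. supp (T y))" using fin good_D(1)[OF g] sx by auto
  have bU: "\<forall>z\<in>(\<Union>y\<in>supp x. supp (T y)). z \<le> w \<and> length z = m"
  proof
    fix z assume "z \<in> (\<Union>y\<in>supp x. supp (T y))"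
    then obtain y where y: "y \<in> supp x" "z \<in> supp (T y)" by auto
    then have "z \<le> y" "length z = length y" using good_D(2,3)[OF g[of y]] sx by auto
    then show "z \<le> w \<and> length z = m" using sx y by (auto intro: order_trans)
  qed
  have ss: "supp (x - lin T x) \<subseteq> supp x \<union> supp (lin T x)" by (auto simp: supp_def)
  show ?thesis unfolding Inv_def
  proof (intro conjI)
    show "finite (supp (x - lin T x))" using ss s fU fin by (meson finite_UnI finite_subset)
    show "(x - lin T x) w = 1" using xw l0 by simp
    show "\<forall>z\<in>supp (x - lin T x). z \<le> w \<and> length z = m" using ss s bU sx by blast
  qed
qed

lemma inv_alt:
  fixes T1 T2 :: "'x::linorder list \<Rightarrow> ('x,'k::field) vec"
  assumes g1: "\<And>y. length y = m \<Longrightarrow> good T1 y" and g2: "\<And>y. length y = m \<Longrightarrow> good T2 y"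
    and t1: "T1 w w = 0" and t2: "T2 w w = 0" and lw: "length w = m"
  shows "Inv m w (alt (\<lambda>x. x - lin T1 x) (\<lambda>x. x - lin T2 x) k (wvec w))"
proof (induction k)
  case 0
  have "supp (wvec w :: ('x,'k) vec) = {w}" by (rule supp_wvec)
  then show ?case using lw by (simp add: Inv_def wvec_def)
next
  case (Suc k)
  show ?case
  proof (cases "even k")
    case True
    have e: "alt (\<lambda>x. x - lin T1 x) (\<lambda>x. x - lin T2 x) (Suc k) (wvec w)
      = alt (\<lambda>x. x - lin T1 x) (\<lambda>x. x - lin T2 x) k (wvec w) - lin T2 (alt (\<lambda>x. x - lin T1 x) (\<lambda>x. x - lin T2 x) k (wvec w))"
      using True by simp
    show ?thesis unfolding e by (rule inv_step[OF g2 t2 Suc.IH])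
  next
    case False
    have e: "alt (\<lambda>x. x - lin T1 x) (\<lambda>x. x - lin T2 x) (Suc k) (wvec w)
      = alt (\<lambda>x. x - lin T1 x) (\<lambda>x. x - lin T2 x) k (wvec w) - lin T1 (alt (\<lambda>x. x - lin T1 x) (\<lambda>x. x - lin T2 x) k (wvec w))"
      using False by simp
    show ?thesis unfolding e by (rule inv_step[OF g1 t1 Suc.IH])
  qed
qed

lemma inv_lm: "Inv m w x \<Longrightarrow> lm x = w"
  unfolding Inv_def lm_def by (intro Max_eqI) (auto simp: supp_def)

theorem lemma2p2p7:
  fixes R :: "('x::linorder, 'k::field) vec set" and N m :: nat
  assumes "N \<ge> 2"
    and "reduced_presentation N R"
    and "side_confluent N R"
    and "N + 1 \<le> m" and "m \<le> 2 * N - 1"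
  shows "\<exists>k\<ge>1.
     (\<forall>v\<in>tens m.
        alt (\<lambda>x. x - lin (tensL (m - N) (opw R)) x) (\<lambda>x. x - lin (tensR (m - N) (opw R)) x) k v
      = alt (\<lambda>x. x - lin (tensR (m - N) (opw R)) x) (\<lambda>x. x - lin (tensL (m - N) (opw R)) x) k v)
   \<and> (\<forall>w. length w = m
        \<and> lin (tensL (m - N) (opw R)) (wvec w) \<noteq> wvec w
        \<and> lin (tensR (m - N) (opw R)) (wvec w) \<noteq> wvec w
        \<longrightarrow> lm (alt (\<lambda>x. x - lin (tensL (m - N) (opw R)) x)
                    (\<lambda>x. x - lin (tensR (m - N) (opw R)) x) k (wvec w)) = w)"
proof -
  define a where "a = m - N"
  have a1: "1 \<le> a" "a \<le> N - 1" and ma: "a + N = m" using assms(1,4,5) by (auto simp: a_def)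
  define T1 where "T1 = tensL a (opw R)"
  define T2 where "T2 = tensR a (opw R)"
  obtain k where k1: "k \<ge> 1" and kc: "\<forall>v\<in>tens m. alt (lin T1) (lin T2) k v = alt (lin T2) (lin T1) k v"
    using assms(3) a1 ma unfolding side_confluent_def T1_def T2_def by blast
  have go: "\<And>u. good (opw R) u" by (rule opw_good[OF assms(2)])
  have g1: "\<And>w. length w = m \<Longrightarrow> good T1 w" unfolding T1_def
    by (rule good_tensL[OF go]) (use ma in auto)
  have g2: "\<And>w. length w = m \<Longrightarrow> good T2 w" unfolding T2_def
    by (rule good_tensR[OF go]) (use ma in auto)
  have P: "proj2 (tens m) (lin T1) (lin T2)" by (rule proj2_lin[OF g1 g2])
  have part1: "\<forall>v::('x,'k) vec\<in>tens m.
        alt (\<lambda>x. x - lin T1 x) (\<lambda>x. x - lin T2 x) k v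
      = alt (\<lambda>x. x - lin T2 x) (\<lambda>x. x - lin T1 x) k v"
  proof
    fix v :: "('x,'k) vec" assume v: "v \<in> tens m"
    show "alt (\<lambda>x. x - lin T1 x) (\<lambda>x. x - lin T2 x) k v
      = alt (\<lambda>x. x - lin T2 x) (\<lambda>x. x - lin T1 x) k v"
    proof -
      have m: "alt (\<lambda>x. x - lin T1 x) (\<lambda>x. x - lin T2 x) k v - sg k (alt (lin T1) (lin T2) k v)
          = alt (\<lambda>x. x - lin T2 x) (\<lambda>x. x - lin T1 x) k v - sg k (alt (lin T2) (lin T1) k v)"
        by (rule main_alg[OF P v])
      have ab: "alt (lin T1) (lin T2) k v = alt (lin T2) (lin T1) k v" using kc v by blast
      let ?X = "alt (\<lambda>x. x - lin T1 x) (\<lambda>x. x - lin T2 x) k v"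
      let ?Y = "alt (\<lambda>x. x - lin T2 x) (\<lambda>x. x - lin T1 x) k v"
      let ?c = "sg k (alt (lin T2) (lin T1) k v)"
      have m': "?X - ?c = ?Y - ?c" using m unfolding ab .
      have "(?X - ?c) + ?c = (?Y - ?c) + ?c" using m' by (rule arg_cong)
      then show ?thesis unfolding diff_add_cancel .
    qed
  qed
  have part2: "\<forall>w. length w = m
        \<and> lin T1 (wvec w) \<noteq> wvec w
        \<and> lin T2 (wvec w) \<noteq> wvec w
        \<longrightarrow> lm (alt (\<lambda>x. x - lin T1 x) (\<lambda>x. x - lin T2 x) k (wvec w)) = w"
  proof (intro allI impI)
    fix w :: "'x list"
    assume h: "length w = m \<and> lin T1 (wvec w) \<noteq> wvec w \<and> lin T2 (wvec w) \<noteq> wvec w"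
    then have "T1 w \<noteq> wvec w" "T2 w \<noteq> wvec w" by (auto simp: lin_wvec)
    moreover have "good T1 w" "good T2 w" using g1 g2 h by blast+
    ultimately have "T1 w w = 0" "T2 w w = 0" using good_D(4) by blast+
    then show "lm (alt (\<lambda>x. x - lin T1 x) (\<lambda>x. x - lin T2 x) k (wvec w)) = w"
      using inv_lm[OF inv_alt[OF g1 g2]] h by blast
  qed
  show ?thesis
    apply (intro exI[of _ k] conjI)
      apply (rule k1)
     apply (rule part1[unfolded T1_def T2_def a_def])
    apply (rule part2[unfolded T1_def T2_def a_def])
    done
qed

end
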